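(* Let $\mathcal{X}$ be a real Hilbert space, let $\mathbb{A},\mathbb{B},\mathbb{C}:\mathcal{X}\to 2^{\mathcal{X}}$ be maximal monotone operators with $\mathbb{C}$ $\beta$-cocoercive for some $\beta>0$ (so $\mathbb{C}$ is single-valued), let $\gamma>0$, and define $$T=\mathbb{J}_{\gamma\mathbb{C}}\circ\big(\mathbb{J}_{\gamma \mathbb{A}}\circ(2\mathbb{J}_{\gamma \mathbb{B}}-I-\gamma \mathbb{C}\mathbb{J}_{\gamma \mathbb{B}})+\gamma \mathbb{C}\mathbb{J}_{\gamma \mathbb{B}}\big)+ (I-\mathbb{J}_{\gamma \mathbb{B}}).$$ Then $$\operatorname{zer}(\mathbb{A}+\mathbb{B}+\mathbb{C})=\mathbb{J}_{\gamma\mathbb{B}}(\operatorname{Fix}T),$$ where $\operatorname{Fix}T=\{x+\gamma u\;:\;0\in(\mathbb{A}+\mathbb{B}+\mathbb{C})x,\ u\in(\mathbb{B}x)\cap(-\mathbb{A}x-\mathbb{C}x)\}$.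
   Context: For a monotone operator $M$, $\mathbb{J}_{M}=(I+M)^{-1}$ is its resolvent ($I$ the identity on $\mathcal{X}$). $\operatorname{zer}(M)=\{x: 0\in Mx\}$. $\operatorname{Fix}T=\{z: Tz=z\}$ is the fixed-point set of $T$. An operator $\mathbb{C}$ is $\beta$-cocoercive if $\langle u-v,x-y\rangle\ge\beta\|u-v\|^2$ for all $x,y$, $u\in\mathbb{C}x$, $v\in\mathbb{C}y$. *)

theory Defs
  imports "HOL-Analysis.Analysis"
begin

type_synonym 'a operator = "'a \<Rightarrow> 'a set"

definition monotone_op :: "('a::real_inner) operator \<Rightarrow> bool" where
  "monotone_op M \<longleftrightarrow> (\<forall>x y u v. u \<in> M x \<longrightarrow> v \<in> M y \<longrightarrow> inner (u - v) (x - y) \<ge> 0)"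

definition maximal_monotone :: "('a::real_inner) operator \<Rightarrow> bool" where
  "maximal_monotone M \<longleftrightarrow> monotone_op M \<and>
     (\<forall>M'. monotone_op M' \<and> (\<forall>x. M x \<subseteq> M' x) \<longrightarrow> M' = M)"

definition cocoercive :: "real \<Rightarrow> ('a::real_inner) operator \<Rightarrow> bool" where
  "cocoercive \<beta> C \<longleftrightarrow> (\<forall>x y u v. u \<in> C x \<longrightarrow> v \<in> C y \<longrightarrow>
       inner (u - v) (x - y) \<ge> \<beta> * (norm (u - v))\<^sup>2)"

definition op_id :: "'a operator" where
  "op_id x = {x}"

definition op_add :: "('a::real_vector) operator \<Rightarrow> 'a operator \<Rightarrow> 'a operator" where
  "op_add M N x = {u + v | u v. u \<in> M x \<and> v \<in> N x}"

definition op_scale :: "real \<Rightarrow> ('a::real_vector) operator \<Rightarrow> 'a operator" where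
  "op_scale c M x = (\<lambda>u. c *\<^sub>R u) ` M x"

definition op_comp :: "'a operator \<Rightarrow> 'a operator \<Rightarrow> 'a operator" where
  "op_comp M N x = (\<Union>y\<in>N x. M y)"

text \<open>Resolvent J_M = (I + M)^{-1}: y \<in> J_M x iff x \<in> y + M y.\<close>
definition resolvent :: "('a::real_vector) operator \<Rightarrow> 'a operator" where
  "resolvent M x = {y. x - y \<in> M y}"

definition zer :: "('a::real_vector) operator \<Rightarrow> 'a set" where
  "zer M = {x. 0 \<in> M x}"

definition Fix :: "'a operator \<Rightarrow> 'a set" where
  "Fix T = {z. T z = {z}}"

definition op_image :: "'a operator \<Rightarrow> 'a set \<Rightarrow> 'a set" where
  "op_image M S = (\<Union>z\<in>S. M z)"

end

theory Submission
  imports Defs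
begin

lemma res_iff:
  assumes "\<gamma> > 0"
  shows "y \<in> resolvent (op_scale \<gamma> M) z \<longleftrightarrow> (\<exists>m\<in>M y. z = y + \<gamma> *\<^sub>R m)"
  unfolding resolvent_def op_scale_def by (auto simp: algebra_simps)

lemma res_unique:
  fixes M :: "('a::real_inner) operator"
  assumes "monotone_op M" "\<gamma> > 0" "m1 \<in> M y1" "m2 \<in> M y2"
    and e: "y1 + \<gamma> *\<^sub>R m1 = y2 + \<gamma> *\<^sub>R m2"
  shows "y1 = y2"
proof -
  have d: "y1 - y2 = \<gamma> *\<^sub>R (m2 - m1)" using e by (simp add: algebra_simps)
  have "inner (m1 - m2) (y1 - y2) \<ge> 0" using assms unfolding monotone_op_def by blast
  hence "inner (m1 - m2) (\<gamma> *\<^sub>R (m2 - m1)) \<ge> 0" using d by simp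
  hence "- \<gamma> * inner (m1 - m2) (m1 - m2) \<ge> 0"
    by (simp add: inner_diff_right inner_diff_left inner_commute algebra_simps)
  hence "inner (m1 - m2) (m1 - m2) \<le> 0" using \<open>\<gamma> > 0\<close>
    by (simp add: mult_le_0_iff)
  hence "inner (m1 - m2) (m1 - m2) = 0" using inner_ge_zero[of "m1 - m2"] by linarith
  hence "m1 = m2" by simp
  thus ?thesis using d by simp
qed

lemma res_single:
  fixes M :: "('a::real_inner) operator"
  assumes "monotone_op M" "\<gamma> > 0" "m \<in> M y"
  shows "resolvent (op_scale \<gamma> M) (y + \<gamma> *\<^sub>R m) = {y}"
  using assms res_unique[OF assms(1,2)] by (auto simp: res_iff)

lemma coco_single:
  assumes "cocoercive \<beta> C" "\<beta> > 0" "c \<in> C x"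
  shows "C x = {c}"
proof -
  have "\<And>d. d \<in> C x \<Longrightarrow> d = c"
  proof -
    fix d assume "d \<in> C x"
    hence "\<beta> * (norm (d - c))\<^sup>2 \<le> inner (d - c) (x - x)" using assms unfolding cocoercive_def
      by blast
    hence "\<beta> * (norm (d - c))\<^sup>2 \<le> 0" by simp
    thus "d = c" using assms(2)
      by (simp add: mult_le_0_iff)
  qed
  thus ?thesis using assms(3) by blast
qed

lemma op_add_mem: "v \<in> op_add M N x \<longleftrightarrow> (\<exists>u\<in>M x. \<exists>w\<in>N x. v = u + w)"
  unfolding op_add_def by blast
lemma op_scale_mem: "v \<in> op_scale c M x \<longleftrightarrow> (\<exists>u\<in>M x. v = c *\<^sub>R u)"
  unfolding op_scale_def by blast
lemma op_comp_mem: "v \<in> op_comp M N x \<longleftrightarrow> (\<exists>y\<in>N x. v \<in> M y)"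
  unfolding op_comp_def by blast
lemma op_id_mem: "v \<in> op_id x \<longleftrightarrow> v = x"
  unfolding op_id_def by blast

lemma op_addE: "v \<in> op_add M N x \<Longrightarrow> (\<And>u w. u \<in> M x \<Longrightarrow> w \<in> N x \<Longrightarrow> v = u + w \<Longrightarrow> P) \<Longrightarrow> P"
  unfolding op_add_def by blast
lemma op_scaleE: "v \<in> op_scale c M x \<Longrightarrow> (\<And>u. u \<in> M x \<Longrightarrow> v = c *\<^sub>R u \<Longrightarrow> P) \<Longrightarrow> P"
  unfolding op_scale_def by blast
lemma op_compE: "v \<in> op_comp M N x \<Longrightarrow> (\<And>y. y \<in> N x \<Longrightarrow> v \<in> M y \<Longrightarrow> P) \<Longrightarrow> P"
  unfolding op_comp_def by blast
lemma op_idE: "v \<in> op_id x \<Longrightarrow> v = x"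
  unfolding op_id_def by blast

lemma zer_mem: "0 \<in> op_add (op_add A B) C x \<longleftrightarrow> (\<exists>a\<in>A x. \<exists>b\<in>B x. \<exists>c\<in>C x. a + b + c = 0)"
proof
  assume "0 \<in> op_add (op_add A B) C x"
  then obtain u c where u: "u \<in> op_add A B x" and c: "c \<in> C x" and e: "0 = u + c"
    using op_add_mem[of 0] by metis
  from u obtain a b where ab: "a \<in> A x" "b \<in> B x" "u = a + b" using op_add_mem[of u] by metis
  have "a + b + c = 0" using e ab(3) by simp
  thus "\<exists>a\<in>A x. \<exists>b\<in>B x. \<exists>c\<in>C x. a + b + c = 0" using c ab(1,2) by blast
next
  assume "\<exists>a\<in>A x. \<exists>b\<in>B x. \<exists>c\<in>C x. a + b + c = 0"
  then obtain a b c where h: "a \<in> A x" "b \<in> B x" "c \<in> C x" "a + b + c = 0" by blast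
  have "a + b \<in> op_add A B x" unfolding op_add_mem using h by blast
  moreover have "0 = (a + b) + c" using h(4) by simp
  ultimately show "0 \<in> op_add (op_add A B) C x" using h(3) unfolding op_add_mem[of 0] by blast
qed

theorem lemma2:
  fixes A B C :: "('a::{real_inner, complete_space}) operator"
    and \<beta> \<gamma> :: real
  assumes "maximal_monotone A" and "maximal_monotone B" and "maximal_monotone C"
    and "\<beta> > 0" and "cocoercive \<beta> C" and "\<gamma> > 0"
  defines "JB \<equiv> resolvent (op_scale \<gamma> B)"
    and "CJB \<equiv> op_comp C (resolvent (op_scale \<gamma> B))"
  defines "T \<equiv> op_add
      (op_comp (resolvent (op_scale \<gamma> C))
         (op_add
            (op_comp (resolvent (op_scale \<gamma> A))
               (op_add (op_add (op_scale 2 JB) (op_scale (-1) op_id)) (op_scale (-\<gamma>) CJB)))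
            (op_scale \<gamma> CJB)))
      (op_add op_id (op_scale (-1) JB))"
  shows "zer (op_add (op_add A B) C) = op_image JB (Fix T) \<and>
         Fix T = {x + \<gamma> *\<^sub>R u | x u. 0 \<in> op_add (op_add A B) C x \<and>
                   u \<in> B x \<inter> {- a - c | a c. a \<in> A x \<and> c \<in> C x}}"
proof -
  have mA: "monotone_op A" using assms(1) unfolding maximal_monotone_def by (rule conjunct1)
  have mB: "monotone_op B" using assms(2) unfolding maximal_monotone_def by (rule conjunct1)
  have mC: "monotone_op C" using assms(3) unfolding maximal_monotone_def by (rule conjunct1)
  have g: "\<gamma> > 0" by fact
  have JBs: "\<And>x b. b \<in> B x \<Longrightarrow> JB (x + \<gamma> *\<^sub>R b) = {x}"
    unfolding JB_def using res_single[OF mB g] by blast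
  have JBu: "\<And>z y1 y2. y1 \<in> JB z \<Longrightarrow> y2 \<in> JB z \<Longrightarrow> y1 = y2"
  proof -
    fix z y1 y2 assume a1: "y1 \<in> JB z" and a2: "y2 \<in> JB z"
    from a1 obtain m1 where m1: "m1 \<in> B y1" "z = y1 + \<gamma> *\<^sub>R m1"
      unfolding JB_def res_iff[OF g] by blast
    from a2 obtain m2 where m2: "m2 \<in> B y2" "z = y2 + \<gamma> *\<^sub>R m2"
      unfolding JB_def res_iff[OF g] by blast
    show "y1 = y2" using res_unique[OF mB g m1(1) m2(1)] m1(2) m2(2) by simp
  qed
  have Cs: "\<And>x c. c \<in> C x \<Longrightarrow> C x = {c}"
    using coco_single[OF assms(5,4)] by blast
  have fwd: "x + \<gamma> *\<^sub>R b \<in> Fix T"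
    if h: "a \<in> A x" "b \<in> B x" "c \<in> C x" "a + b + c = 0" for x a b c
  proof -
    define z where "z = x + \<gamma> *\<^sub>R b"
    have j: "JB z = {x}" using JBs h z_def by simp
    have cj: "CJB z = {c}" using j Cs[OF h(3)] unfolding CJB_def JB_def[symmetric]
      by (simp add: op_comp_def)
    have i1: "op_add (op_add (op_scale 2 JB) (op_scale (-1) op_id)) (op_scale (-\<gamma>) CJB) z
       = {x + \<gamma> *\<^sub>R a}"
    proof -
      have "b = (a + b + c) - a - c" by (simp add: algebra_simps)
      hence "b = - a - c" using h(4) by simp
      hence "2 *\<^sub>R x + (-1) *\<^sub>R (x + \<gamma> *\<^sub>R (- a - c)) + (-\<gamma>) *\<^sub>R c = x + \<gamma> *\<^sub>R a"
        by (simp add: algebra_simps scaleR_2)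
      hence "2 *\<^sub>R x + (-1) *\<^sub>R z + (-\<gamma>) *\<^sub>R c = x + \<gamma> *\<^sub>R a"
        using z_def \<open>b = - a - c\<close> by simp
      thus ?thesis using j cj by (simp add: op_add_def op_scale_def op_id_def)
    qed
    have i2: "op_comp (resolvent (op_scale \<gamma> A))
         (op_add (op_add (op_scale 2 JB) (op_scale (-1) op_id)) (op_scale (-\<gamma>) CJB)) z = {x}"
      using i1 res_single[OF mA g h(1)] by (simp add: op_comp_def)
    have i3: "op_add (op_comp (resolvent (op_scale \<gamma> A))
         (op_add (op_add (op_scale 2 JB) (op_scale (-1) op_id)) (op_scale (-\<gamma>) CJB)))
            (op_scale \<gamma> CJB) z = {x + \<gamma> *\<^sub>R c}"
      using i2 cj by (simp add: op_add_def op_scale_def)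
    have i4: "T z = {z}"
      using i3 res_single[OF mC g h(3)] j unfolding T_def
      by (simp add: op_add_def op_scale_def op_comp_def op_id_def)
    thus ?thesis unfolding Fix_def z_def by simp
  qed
  have bwd: "\<exists>x a b c. a \<in> A x \<and> b \<in> B x \<and> c \<in> C x \<and> a + b + c = 0 \<and> z = x + \<gamma> *\<^sub>R b"
    if "z \<in> Fix T" for z
  proof -
    have "z \<in> T z" using that unfolding Fix_def by simp
    then obtain w y y1 y2 c1 p y3 c where
      y: "y \<in> JB z" and y1: "y1 \<in> JB z" and y2: "y2 \<in> JB z" and c1: "c1 \<in> C y2"
      and p: "p \<in> resolvent (op_scale \<gamma> A) (2 *\<^sub>R y1 + (-1) *\<^sub>R z + (-\<gamma>) *\<^sub>R c1)"
      and y3: "y3 \<in> JB z" and c: "c \<in> C y3"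
      and w: "w \<in> resolvent (op_scale \<gamma> C) (p + \<gamma> *\<^sub>R c)"
      and ze: "z = w + (z + (-1) *\<^sub>R y)"
    proof -
      have zT: "z \<in> op_add (op_comp (resolvent (op_scale \<gamma> C))
         (op_add
            (op_comp (resolvent (op_scale \<gamma> A))
               (op_add (op_add (op_scale 2 JB) (op_scale (-1) op_id)) (op_scale (-\<gamma>) CJB)))
            (op_scale \<gamma> CJB))) (op_add op_id (op_scale (-1) JB)) z"
        using \<open>z \<in> T z\<close> unfolding T_def .
      from zT obtain p q where p: "p \<in> op_comp (resolvent (op_scale \<gamma> C))
         (op_add
            (op_comp (resolvent (op_scale \<gamma> A))
               (op_add (op_add (op_scale 2 JB) (op_scale (-1) op_id)) (op_scale (-\<gamma>) CJB)))
            (op_scale \<gamma> CJB)) z" and q: "q \<in> op_add op_id (op_scale (-1) JB) z" and zpq0: "z = p + q"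
        by (rule op_addE)
      from q obtain u1 w1 where u1: "u1 \<in> op_id z" and w1: "w1 \<in> op_scale (-1) JB z" and q1: "q = u1 + w1"
        by (rule op_addE)
      from u1 have u1z: "u1 = z" by (rule op_idE)
      from w1 obtain y where y1': "y \<in> JB z" and w1y: "w1 = (-1) *\<^sub>R y" by (rule op_scaleE)
      have y: "y \<in> JB z" "q = z + (-1) *\<^sub>R y" using y1' q1 unfolding u1z w1y by simp_all
      have zpq: "z = p + q" by (rule zpq0)
      from p obtain s where s: "s \<in> op_add
            (op_comp (resolvent (op_scale \<gamma> A))
               (op_add (op_add (op_scale 2 JB) (op_scale (-1) op_id)) (op_scale (-\<gamma>) CJB)))
            (op_scale \<gamma> CJB) z" and ps: "p \<in> resolvent (op_scale \<gamma> C) s"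
        by (rule op_compE)
      from s obtain t gc where t: "t \<in> op_comp (resolvent (op_scale \<gamma> A))
               (op_add (op_add (op_scale 2 JB) (op_scale (-1) op_id)) (op_scale (-\<gamma>) CJB)) z"
          and gc: "gc \<in> op_scale \<gamma> CJB z" and st0: "s = t + gc"
        by (rule op_addE)
      from gc obtain c where cc0: "c \<in> CJB z" and gcc: "gc = \<gamma> *\<^sub>R c" by (rule op_scaleE)
      from cc0 obtain y3 where y3: "y3 \<in> JB z" and c: "c \<in> C y3"
        unfolding CJB_def JB_def by (rule op_compE)
      have st: "s = t + \<gamma> *\<^sub>R c" using st0 unfolding gcc .
      from t obtain r where r: "r \<in> op_add (op_add (op_scale 2 JB) (op_scale (-1) op_id)) (op_scale (-\<gamma>) CJB) z"
          and tr: "t \<in> resolvent (op_scale \<gamma> A) r"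
        by (rule op_compE)
      from r obtain r1 r2 where r1: "r1 \<in> op_add (op_scale 2 JB) (op_scale (-1) op_id) z"
          and r2: "r2 \<in> op_scale (-\<gamma>) CJB z" and rr: "r = r1 + r2" by (rule op_addE)
      from r1 obtain r3 r4 where r3: "r3 \<in> op_scale 2 JB z" and r4: "r4 \<in> op_scale (-1) op_id z"
          and rr1: "r1 = r3 + r4" by (rule op_addE)
      from r3 obtain y1 where y1: "y1 \<in> JB z" and r3e: "r3 = 2 *\<^sub>R y1" by (rule op_scaleE)
      from r4 obtain i where i: "i \<in> op_id z" and r4e: "r4 = (-1) *\<^sub>R i" by (rule op_scaleE)
      from i have iz: "i = z" by (rule op_idE)
      from r2 obtain c1 where c1': "c1 \<in> CJB z" and r2e: "r2 = (-\<gamma>) *\<^sub>R c1" by (rule op_scaleE)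
      from c1' obtain y2 where y2: "y2 \<in> JB z" and c1: "c1 \<in> C y2"
        unfolding CJB_def JB_def by (rule op_compE)
      have re: "r = 2 *\<^sub>R y1 + (-1) *\<^sub>R z + (-\<gamma>) *\<^sub>R c1"
        using rr unfolding rr1 r3e r4e iz r2e .
      show ?thesis
      proof (rule that[of y y1 y2 c1 t y3 c p])
        show "z = p + (z + (-1) *\<^sub>R y)" using zpq unfolding y(2) .
        show "t \<in> resolvent (op_scale \<gamma> A) (2 *\<^sub>R y1 + (-1) *\<^sub>R z + (-\<gamma>) *\<^sub>R c1)"
          using tr unfolding re .
        show "p \<in> resolvent (op_scale \<gamma> C) (t + \<gamma> *\<^sub>R c)" using ps unfolding st .
      qed (fact y(1) y1 y2 c1 y3 c)+
    qed
    have "y1 = y" "y2 = y" "y3 = y" using JBu y y1 y2 y3 by blast+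
    have "z - z = w + (z + (-1) *\<^sub>R y) - z" using ze by (rule arg_cong[where f="\<lambda>t. t - z"])
    hence wy: "w = y" by (simp add: algebra_simps)
    from y obtain b where b: "b \<in> B y" "z = y + \<gamma> *\<^sub>R b"
      unfolding JB_def by (auto simp: res_iff[OF g])
    have cc: "c1 = c" using Cs c c1 \<open>y2 = y\<close> \<open>y3 = y\<close> by blast
    from w wy obtain c' where c': "c' \<in> C y" "p + \<gamma> *\<^sub>R c = y + \<gamma> *\<^sub>R c'"
      by (auto simp: res_iff[OF g])
    have "c' = c" using Cs c c' \<open>y3 = y\<close> by blast
    hence py: "p = y" using c' by simp
    from p py obtain a where a: "a \<in> A y"
      "2 *\<^sub>R y1 + (-1) *\<^sub>R z + (-\<gamma>) *\<^sub>R c1 = y + \<gamma> *\<^sub>R a"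
      by (auto simp: res_iff[OF g])
    have "\<gamma> *\<^sub>R (a + b + c) = 0"
      using a(2) b(2) cc \<open>y1 = y\<close> by (simp add: algebra_simps scaleR_2)
    hence "a + b + c = 0" using g by simp
    thus ?thesis using a(1) b c \<open>y3 = y\<close> by blast
  qed
  have fixc: "Fix T = {x + \<gamma> *\<^sub>R b | x a b c. a \<in> A x \<and> b \<in> B x \<and> c \<in> C x \<and> a + b + c = 0}"
    using fwd bwd by blast
  have part2: "Fix T = {x + \<gamma> *\<^sub>R u | x u. 0 \<in> op_add (op_add A B) C x \<and>
                   u \<in> B x \<inter> {- a - c | a c. a \<in> A x \<and> c \<in> C x}}"
    unfolding fixc
  proof (intro set_eqI iffI)
    fix z assume "z \<in> {x + \<gamma> *\<^sub>R b | x a b c. a \<in> A x \<and> b \<in> B x \<and> c \<in> C x \<and> a + b + c = 0}"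
    then obtain x a b c where h: "a \<in> A x" "b \<in> B x" "c \<in> C x" "a + b + c = 0" "z = x + \<gamma> *\<^sub>R b"
      by blast
    have "0 \<in> op_add (op_add A B) C x" unfolding zer_mem using h by blast
    moreover have "b = (a + b + c) - a - c" by (simp add: algebra_simps)
      hence "b = - a - c" using h(4) by simp
    ultimately show "z \<in> {x + \<gamma> *\<^sub>R u | x u. 0 \<in> op_add (op_add A B) C x \<and>
                   u \<in> B x \<inter> {- a - c | a c. a \<in> A x \<and> c \<in> C x}}"
      using h by blast
  next
    fix z assume "z \<in> {x + \<gamma> *\<^sub>R u | x u. 0 \<in> op_add (op_add A B) C x \<and>
                   u \<in> B x \<inter> {- a - c | a c. a \<in> A x \<and> c \<in> C x}}"
    then obtain x u a c where h: "u \<in> B x" "a \<in> A x" "c \<in> C x" "u = - a - c" "z = x + \<gamma> *\<^sub>R u"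
      by blast
    have "a + u + c = 0" using h(4) by simp
    thus "z \<in> {x + \<gamma> *\<^sub>R b | x a b c. a \<in> A x \<and> b \<in> B x \<and> c \<in> C x \<and> a + b + c = 0}"
      using h by blast
  qed
  have part1: "zer (op_add (op_add A B) C) = op_image JB (Fix T)"
  proof (intro set_eqI iffI)
    fix x assume "x \<in> zer (op_add (op_add A B) C)"
    then obtain a b c where h: "a \<in> A x" "b \<in> B x" "c \<in> C x" "a + b + c = 0"
      unfolding zer_def mem_Collect_eq zer_mem by blast
    have "x + \<gamma> *\<^sub>R b \<in> Fix T" using fwd h by blast
    moreover have "x \<in> JB (x + \<gamma> *\<^sub>R b)" using JBs h by simp
    ultimately show "x \<in> op_image JB (Fix T)" unfolding op_image_def by blast
  next
    fix x assume "x \<in> op_image JB (Fix T)"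
    then obtain z where z: "z \<in> Fix T" "x \<in> JB z" unfolding op_image_def by blast
    then obtain y a b c where h: "a \<in> A y" "b \<in> B y" "c \<in> C y" "a + b + c = 0" "z = y + \<gamma> *\<^sub>R b"
      using bwd by blast
    have "x = y" using JBs h z by simp
    hence "0 \<in> op_add (op_add A B) C x" unfolding zer_mem using h by blast
    thus "x \<in> zer (op_add (op_add A B) C)" unfolding zer_def by simp
  qed
  show ?thesis using part1 part2 by blast
qed

end
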